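(* Let $G$ be a simple undirected graph and $s,t\in V(G)$. Then $s$ and $t$ lie in the same biconnected component $B$ of $G+st$, and $B = G_{s,t}+st$.
   Context: $G+st$ denotes the graph obtained from $G$ by adding the edge $st$ (equal to $G$ if $st\in E(G)$); for a subgraph $H$, $H+st$ is defined analogously. The $(s,t)$-relevant part $G_{s,t}$ of $G$ is the subgraph of $G$ induced by all vertices that lie on at least one (simple) $(s,t)$-path in $G$. Biconnected components are the classes of the equivalence relation on edges in which two edges are related if they are equal or lie on a common simple cycle; a biconnected component is regarded as the subgraph formed by such an edge class. *)

theory Defs
  imports Main
begin

definition simple_graph :: "'a set \<Rightarrow> 'a set set \<Rightarrow> bool" where
  "simple_graph V E \<longleftrightarrow> (\<forall>e\<in>E. \<exists>u v. e = {u, v} \<and> u \<noteq> v \<and> u \<in> V \<and> v \<in> V)"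

definition is_path :: "'a set set \<Rightarrow> 'a list \<Rightarrow> 'a \<Rightarrow> 'a \<Rightarrow> bool" where
  "is_path E p s t \<longleftrightarrow> p \<noteq> [] \<and> hd p = s \<and> last p = t \<and> distinct p \<and>
     (\<forall>i. Suc i < length p \<longrightarrow> {p ! i, p ! Suc i} \<in> E)"

definition cycle_edges :: "'a list \<Rightarrow> 'a set set" where
  "cycle_edges c = {{c ! i, c ! ((Suc i) mod length c)} | i. i < length c}"

definition is_cycle :: "'a set set \<Rightarrow> 'a list \<Rightarrow> bool" where
  "is_cycle E c \<longleftrightarrow> length c \<ge> 3 \<and> distinct c \<and> cycle_edges c \<subseteq> E"

definition bicon_rel :: "'a set set \<Rightarrow> 'a set \<Rightarrow> 'a set \<Rightarrow> bool" where
  "bicon_rel E e f \<longleftrightarrow> e = f \<or> (\<exists>c. is_cycle E c \<and> e \<in> cycle_edges c \<and> f \<in> cycle_edges c)"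

definition biconnected_component :: "'a set \<Rightarrow> 'a set set \<Rightarrow> 'a set \<times> 'a set set \<Rightarrow> bool" where
  "biconnected_component V E B \<longleftrightarrow>
     (\<exists>e\<in>E. snd B = {f \<in> E. bicon_rel E e f} \<and> fst B = \<Union>(snd B))"

definition add_edge :: "'a set \<times> 'a set set \<Rightarrow> 'a \<Rightarrow> 'a \<Rightarrow> 'a set \<times> 'a set set" where
  "add_edge G s t = (fst G \<union> {s, t}, snd G \<union> {{s, t}})"

definition relevant_part :: "'a set \<Rightarrow> 'a set set \<Rightarrow> 'a \<Rightarrow> 'a \<Rightarrow> 'a set \<times> 'a set set" where
  "relevant_part V E s t =
     (let R = {v. \<exists>p. is_path E p s t \<and> v \<in> set p} in (R, {e \<in> E. e \<subseteq> R}))"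

end

theory Submission imports Defs begin

lemma path_nonempty: "is_path E p a b \<Longrightarrow> p \<noteq> []"
  by (simp add: is_path_def)

lemma path_single: "is_path E [v] v v"
  by (simp add: is_path_def)

lemma path_cons:
  assumes "is_path E W y w" "x \<notin> set W" "{x,y} \<in> E"
  shows "is_path E (x#W) x w"
proof -
  have ne: "W \<noteq> []" and hy: "hd W = y" using assms(1) by (auto simp: is_path_def)
  have y0: "W ! 0 = y" using ne hy by (simp add: hd_conv_nth)
  show ?thesis unfolding is_path_def
  proof (intro conjI allI impI)
    fix i assume "Suc i < length (x#W)"
    then show "{(x#W) ! i, (x#W) ! Suc i} \<in> E"
      using assms y0 by (cases i) (auto simp: is_path_def)
  qed (use assms ne in \<open>auto simp: is_path_def\<close>)
qed

lemma path_join: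
  assumes "is_path E xs a x" "is_path E ys y b" "{x,y} \<in> E" "set xs \<inter> set ys = {}"
  shows "is_path E (xs@ys) a b \<and> (\<exists>i. Suc i < length (xs@ys) \<and> (xs@ys)!i = x \<and> (xs@ys)!Suc i = y)"
proof -
  have ne1: "xs \<noteq> []" and ne2: "ys \<noteq> []" using assms by (auto simp: is_path_def)
  have lx: "xs ! (length xs - 1) = x" using assms(1) ne1 by (simp add: is_path_def last_conv_nth)
  have hy: "ys ! 0 = y" using assms(2) ne2 by (simp add: is_path_def hd_conv_nth)
  have p: "is_path E (xs@ys) a b" unfolding is_path_def
  proof (intro conjI allI impI)
    fix i assume i: "Suc i < length (xs@ys)"
    consider "Suc i < length xs" | "Suc i = length xs" | "Suc i > length xs" by linarith
    then show "{(xs@ys) ! i, (xs@ys) ! Suc i} \<in> E"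
    proof cases
      case 1 then show ?thesis using assms(1) by (simp add: nth_append is_path_def)
    next
      case 2 then show ?thesis using assms(3) lx hy
      proof -
        have "i = length xs - 1" using 2 by simp
        then show ?thesis using assms(3) lx hy 2 by (simp add: nth_append)
      qed
    next
      case 3
      then have "Suc (i - length xs) < length ys" using i by auto
      then have "{ys ! (i - length xs), ys ! Suc (i - length xs)} \<in> E" using assms(2) by (simp add: is_path_def)
      moreover have "Suc i - length xs = Suc (i - length xs)" using 3 by auto
      ultimately show ?thesis using 3 by (simp add: nth_append)
    qed
  qed (use assms ne1 ne2 in \<open>auto simp: is_path_def\<close>)
  have "Suc (length xs - 1) < length (xs@ys)" "(xs@ys)!(length xs - 1) = x" "(xs@ys)!Suc (length xs - 1) = y"
    using ne1 ne2 lx hy by (auto simp: nth_append)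
  then show ?thesis using p by blast
qed

lemma path_take:
  assumes "is_path E p a b" "k < length p"
  shows "is_path E (take (Suc k) p) a (p!k)"
  using assms unfolding is_path_def
  apply (auto simp: last_conv_nth hd_conv_nth min_def)
  apply (subgoal_tac "k = length p - 1")
   apply simp
  apply linarith
  done

lemma path_drop:
  assumes "is_path E p a b" "k < length p"
  shows "is_path E (drop k p) (p!k) b"
  using assms unfolding is_path_def
  by (auto simp: hd_drop_conv_nth)

lemma path_rev:
  assumes "is_path E p a b"
  shows "is_path E (rev p) b a"
  unfolding is_path_def
proof (intro conjI allI impI)
  fix i assume i: "Suc i < length (rev p)"
  define n where "n = length p"
  define j where "j = n - 2 - i"
  have "Suc j < length p" using i n_def j_def by auto
  then have "{p!j, p!Suc j} \<in> E" using assms by (simp add: is_path_def)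
  moreover have "rev p ! i = p ! Suc j" "rev p ! Suc i = p ! j"
    using i by (auto simp: rev_nth n_def j_def Suc_diff_Suc)
  ultimately show "{rev p ! i, rev p ! Suc i} \<in> E" by (simp add: insert_commute)
qed (use assms in \<open>auto simp: is_path_def hd_rev last_rev\<close>)

lemma first_hit:
  assumes "is_path E W v b" "v \<notin> S" "b \<in> S"
  shows "\<exists>W' w' a. is_path E W' v w' \<and> set W' \<inter> S = {} \<and> a \<in> S \<and> {w',a} \<in> E \<and> a \<in> set W \<and> set W' \<subseteq> set W"
  using assms
proof (induction W arbitrary: v)
  case Nil then show ?case by (simp add: is_path_def)
next
  case (Cons x W0)
  have xv: "x = v" using Cons.prems by (simp add: is_path_def)
  have ne: "W0 \<noteq> []" using Cons.prems xv by (auto simp: is_path_def)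
  define y where "y = hd W0"
  have y1: "(x#W0) ! 1 = y" using ne by (simp add: y_def hd_conv_nth)
  have exy: "{v,y} \<in> E" using Cons.prems(1) ne y1 xv unfolding is_path_def
    by (metis One_nat_def length_Cons length_greater_0_conv nat_neq_iff not_less_eq nth_Cons_0)
  have pW0: "is_path E W0 y b" using path_drop[OF Cons.prems(1), of 1] ne y1 by simp
  have vnot: "v \<notin> set W0" using Cons.prems(1) xv by (simp add: is_path_def)
  show ?case
  proof (cases "y \<in> S")
    case True
    then show ?thesis using path_single[of E v] Cons.prems(2) exy ne y_def xv
      by (intro exI[of _ "[v]"] exI[of _ v] exI[of _ y]) auto
  next
    case False
    obtain W' w' a where h: "is_path E W' y w'" "set W' \<inter> S = {}" "a \<in> S" "{w',a} \<in> E" "a \<in> set W0"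
      "set W' \<subseteq> set W0"
      using Cons.IH[OF pW0 False Cons.prems(3)] by blast
    have "is_path E (v#W') v w'" using path_cons[OF h(1) _ exy] vnot h(6) by blast
    moreover have "set (v#W') \<inter> S = {}" using h(2) Cons.prems(2) by auto
    moreover have "a \<in> set (x#W0)" "set (v#W') \<subseteq> set (x#W0)" using h xv by auto
    ultimately show ?thesis using h(3,4) by blast
  qed
qed

lemma edge_witness:
  assumes "is_path E p s t" "Suc i < length p" "p!i = x" "p!Suc i = y"
  shows "\<exists>p i. is_path E p s t \<and> Suc i < length p \<and> {p!i, p!Suc i} = {x,y}"
  using assms by blast

lemma attach:
  assumes P: "is_path E P s t" and m: "m < length P" "P!m = u"
    and W: "is_path E W v w" "set W \<inter> set P = {}"
    and a: "a \<in> set P" "a \<noteq> u" "{w,a} \<in> E" and uv: "{u,v} \<in> E"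
  shows "\<exists>p i. is_path E p s t \<and> Suc i < length p \<and> {p!i, p!Suc i} = {u,v}"
proof -
  have dP: "distinct P" using P by (simp add: is_path_def)
  obtain k where k: "k < length P" "P!k = a" using a(1) by (auto simp: in_set_conv_nth)
  have km: "k \<noteq> m" using k m a(2) by auto
  show ?thesis
  proof (cases "m < k")
    case True
    have d1: "is_path E (drop k P) a t" using path_drop[OF P k(1)] k by simp
    have j1: "is_path E (W @ drop k P) v t"
      using path_join[OF W(1) d1 a(3)] W(2) set_drop_subset[of k P] by blast
    have t1: "is_path E (take (Suc m) P) s u" using path_take[OF P m(1)] m by simp
    have "set (take (Suc m) P) \<inter> set (drop k P) = {}"
      using set_take_disj_set_drop_if_distinct[OF dP, of "Suc m" k] True by simp
    moreover have "set (take (Suc m) P) \<inter> set W = {}" using W(2) set_take_subset[of "Suc m" P] by blast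
    ultimately have "set (take (Suc m) P) \<inter> set (W @ drop k P) = {}" by auto
    from path_join[OF t1 j1 uv this] show ?thesis using edge_witness by blast
  next
    case False
    then have km': "k < m" using km by simp
    have t1: "is_path E (take (Suc k) P) s a" using path_take[OF P k(1)] k by simp
    have rW: "is_path E (rev W) w v" using path_rev[OF W(1)] .
    have "{a,w} \<in> E" using a(3) by (simp add: insert_commute)
    then have j1: "is_path E (take (Suc k) P @ rev W) s v"
      using path_join[OF t1 rW] W(2) set_take_subset[of "Suc k" P] by auto
    have d1: "is_path E (drop m P) u t" using path_drop[OF P m(1)] m by simp
    have "set (take (Suc k) P) \<inter> set (drop m P) = {}"
      using set_take_disj_set_drop_if_distinct[OF dP, of "Suc k" m] km' by simp
    moreover have "set W \<inter> set (drop m P) = {}" using W(2) set_drop_subset[of m P] by blast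
    ultimately have "set (take (Suc k) P @ rev W) \<inter> set (drop m P) = {}" by auto
    moreover have "{v,u} \<in> E" using uv by (simp add: insert_commute)
    ultimately have "\<exists>i. is_path E (take (Suc k) P @ rev W @ drop m P) s t \<and>
       Suc i < length (take (Suc k) P @ rev W @ drop m P) \<and>
       (take (Suc k) P @ rev W @ drop m P)!i = v \<and> (take (Suc k) P @ rev W @ drop m P)!Suc i = u"
      using path_join[OF j1 d1] by simp
    then show ?thesis by (metis insert_commute)
  qed
qed

lemma key:
  assumes P: "is_path E P s t" and Q: "is_path E Q s t" and u: "u \<in> set P" and v: "v \<in> set Q"
    and uv: "{u,v} \<in> E" "u \<noteq> v"
  shows "\<exists>p i. is_path E p s t \<and> Suc i < length p \<and> {p!i, p!Suc i} = {u,v}"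
proof -
  have dP: "distinct P" using P by (simp add: is_path_def)
  have dQ: "distinct Q" using Q by (simp add: is_path_def)
  obtain m where m: "m < length P" "P!m = u" using u by (auto simp: in_set_conv_nth)
  show ?thesis
  proof (cases "v \<in> set P")
    case True
    obtain k where k: "k < length P" "P!k = v" using True by (auto simp: in_set_conv_nth)
    have km: "k \<noteq> m" using k m uv by auto
    show ?thesis
    proof (cases "m < k")
      case True
      have t1: "is_path E (take (Suc m) P) s u" using path_take[OF P m(1)] m by simp
      have d1: "is_path E (drop k P) v t" using path_drop[OF P k(1)] k by simp
      have "set (take (Suc m) P) \<inter> set (drop k P) = {}"
        using set_take_disj_set_drop_if_distinct[OF dP, of "Suc m" k] True by simp
      from path_join[OF t1 d1 uv(1) this] show ?thesis using edge_witness by blast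
    next
      case False
      then have km': "k < m" using km by simp
      have t1: "is_path E (take (Suc k) P) s v" using path_take[OF P k(1)] k by simp
      have d1: "is_path E (drop m P) u t" using path_drop[OF P m(1)] m by simp
      have "set (take (Suc k) P) \<inter> set (drop m P) = {}"
        using set_take_disj_set_drop_if_distinct[OF dP, of "Suc k" m] km' by simp
      moreover have "{v,u} \<in> E" using uv by (simp add: insert_commute)
      ultimately have "\<exists>i. is_path E (take (Suc k) P @ drop m P) s t \<and>
         Suc i < length (take (Suc k) P @ drop m P) \<and>
         (take (Suc k) P @ drop m P)!i = v \<and> (take (Suc k) P @ drop m P)!Suc i = u"
        using path_join[OF t1 d1] by simp
      then show ?thesis by (metis insert_commute)
    qed
  next
    case False
    obtain j where j: "j < length Q" "Q!j = v" using v by (auto simp: in_set_conv_nth)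
    have sP: "s \<in> set P" "t \<in> set P" using P by (auto simp: is_path_def)
    have q2: "is_path E (drop j Q) v t" using path_drop[OF Q j(1)] j by simp
    have q1: "is_path E (rev (take (Suc j) Q)) v s" using path_rev[OF path_take[OF Q j(1)]] j by simp
    obtain W2 w2 a2 where h2: "is_path E W2 v w2" "set W2 \<inter> set P = {}" "a2 \<in> set P" "{w2,a2} \<in> E"
       "a2 \<in> set (drop j Q)"
      using first_hit[OF q2 False sP(2)] by blast
    obtain W1 w1 a1 where h1: "is_path E W1 v w1" "set W1 \<inter> set P = {}" "a1 \<in> set P" "{w1,a1} \<in> E"
       "a1 \<in> set (take (Suc j) Q)"
      using first_hit[OF q1 False sP(1)] by auto
    have tq: "take (Suc j) Q = take j Q @ [v]" using j by (simp add: take_Suc_conv_app_nth)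
    have "set (take j Q) \<inter> set (drop j Q) = {}" using set_take_disj_set_drop_if_distinct[OF dQ, of j j] by simp
    then have "a1 \<noteq> a2" using h1(5) h2(5) h1(3) False tq by auto
    then show ?thesis
    proof (cases "a1 = u")
      case True
      then have "a2 \<noteq> u" using \<open>a1 \<noteq> a2\<close> by simp
      then show ?thesis using attach[OF P m h2(1,2,3) _ h2(4) uv(1)] by blast
    next
      case False
      then show ?thesis using attach[OF P m h1(1,2,3) _ h1(4) uv(1)] by blast
    qed
  qed
qed

lemma cyc_edgeI: "k < length c \<Longrightarrow> {c!k, c!(Suc k mod length c)} \<in> cycle_edges c"
  unfolding cycle_edges_def by blast

lemma suc_mod_cases: "x < n \<Longrightarrow> Suc x mod n = (if Suc x = n then 0 else Suc x)"
  by auto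

lemma cyc_edge_inj:
  assumes "distinct c" "length c \<ge> 3" "i < length c" "j < length c"
    "{c!i, c!(Suc i mod length c)} = {c!j, c!(Suc j mod length c)}"
  shows "i = j"
proof -
  define n where "n = length c"
  have n0: "n > 0" using assms(3) n_def by auto
  have si: "Suc i mod n < n" "Suc j mod n < n" using n0 by simp_all
  have ii: "i < n" "j < n" using assms(3,4) n_def by auto
  have eq: "\<And>x y. x < n \<Longrightarrow> y < n \<Longrightarrow> c!x = c!y \<Longrightarrow> x = y"
    using assms(1) n_def nth_eq_iff_index_eq by blast
  have e5: "{c!i, c!(Suc i mod n)} = {c!j, c!(Suc j mod n)}" using assms(5) n_def by simp
  have "(c!i = c!j \<and> c!(Suc i mod n) = c!(Suc j mod n)) \<or>
      (c!i = c!(Suc j mod n) \<and> c!(Suc i mod n) = c!j)"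
    using e5 doubleton_eq_iff by metis
  then show ?thesis
  proof
    assume "c!i = c!j \<and> c!(Suc i mod n) = c!(Suc j mod n)"
    then show ?thesis using eq[OF ii] by blast
  next
    assume h: "c!i = c!(Suc j mod n) \<and> c!(Suc i mod n) = c!j"
    have 1: "i = Suc j mod n" using eq[OF ii(1) si(2)] h by blast
    have 2: "Suc i mod n = j" using eq[OF si(1) ii(2)] h by blast
    have "n \<ge> 3" using assms n_def by simp
    have a: "i = (if Suc j = n then 0 else Suc j)" using 1 suc_mod_cases[of j n] ii by simp
    have b: "j = (if Suc i = n then 0 else Suc i)" using 2 suc_mod_cases[of i n] ii by simp
    show ?thesis
    proof (cases "Suc j = n")
      case True
      then have "i = 0" using a by simp
      then have "j = 1" using b \<open>n \<ge> 3\<close> by simp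
      then show ?thesis using True \<open>n \<ge> 3\<close> by simp
    next
      case False
      then have ij: "i = Suc j" using a by simp
      show ?thesis
      proof (cases "Suc i = n")
        case True
        then have "j = 0" using b by simp
        then show ?thesis using True ij \<open>n \<ge> 3\<close> by simp
      next
        case False
        then have "j = Suc i" using b by simp
        then show ?thesis using ij by simp
      qed
    qed
  qed
qed

lemma path_cycle:
  assumes p: "is_path E p s t" and st: "s \<noteq> t" and i: "Suc i < length p"
    and ne: "{p!i, p!Suc i} \<noteq> {s,t}"
  shows "is_cycle (E \<union> {{s,t}}) p \<and> {s,t} \<in> cycle_edges p \<and> {p!i,p!Suc i} \<in> cycle_edges p"
proof -
  define n where "n = length p"
  have hd: "p!0 = s" and lt: "p!(n-1) = t" and dp: "distinct p"
    using p i by (auto simp: is_path_def n_def hd_conv_nth last_conv_nth)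
  have n3: "n \<ge> 3"
  proof (rule ccontr)
    assume "\<not> n \<ge> 3"
    then have "n = 2" "i = 0" using i n_def by auto
    then show False using ne hd lt by simp
  qed
  have ce: "cycle_edges p \<subseteq> E \<union> {{s,t}}"
  proof
    fix e assume "e \<in> cycle_edges p"
    then obtain k where k: "k < n" "e = {p!k, p!(Suc k mod n)}" unfolding cycle_edges_def n_def by blast
    have pe: "\<forall>i. Suc i < length p \<longrightarrow> {p!i,p!Suc i} \<in> E" using p by (simp add: is_path_def)
    show "e \<in> E \<union> {{s,t}}"
    proof (cases "Suc k < n")
      case True
      then have "{p!k, p!Suc k} \<in> E" using pe n_def by blast
      moreover have "Suc k mod n = Suc k" using True by simp
      ultimately show ?thesis using k(2) by simp
    next
      case False
      then have sk: "Suc k = n" using k by simp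
      then have k1: "k = n - 1" and "Suc k mod n = 0" by auto
      then have "e = {p!k, p!0}" using k(2) by simp
      then have "e = {t, s}" using k1 hd lt by simp
      then show ?thesis by (simp add: insert_commute)
    qed
  qed
  have "{p!(n-1), p!(Suc (n-1) mod n)} \<in> cycle_edges p" using n3 cyc_edgeI[of "n-1" p] n_def by simp
  moreover have "Suc (n-1) mod n = 0" using n3 by simp
  ultimately have 1: "{s,t} \<in> cycle_edges p" using hd lt by (simp add: insert_commute)
  have "{p!i, p!(Suc i mod n)} \<in> cycle_edges p" using i cyc_edgeI[of i p] n_def by simp
  then have 2: "{p!i, p!Suc i} \<in> cycle_edges p" using i n_def by simp
  show ?thesis using 1 2 ce n3 dp by (simp add: is_cycle_def n_def)
qed

lemma mod_lt2: "(x::nat) < 2*n \<Longrightarrow> x mod n = (if x < n then x else x - n)"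
proof (cases "x < n")
  case False
  assume "x < 2*n"
  then have "x - n < n" by simp
  then show ?thesis using False le_mod_geq[of n x] by simp
qed simp

lemma cyc_path:
  assumes c: "is_cycle (E \<union> {{s,t}}) c" and st: "{s,t} \<in> cycle_edges c" and stn: "s \<noteq> t"
  shows "\<exists>p. is_path E p s t \<and> set p = set c"
proof -
  define n where "n = length c"
  have n3: "n \<ge> 3" and dc: "distinct c" and ce: "cycle_edges c \<subseteq> E \<union> {{s,t}}"
    using c by (auto simp: is_cycle_def n_def)
  obtain j where j: "j < n" "{s,t} = {c!j, c!(Suc j mod n)}" using st by (auto simp: cycle_edges_def n_def)
  define c' where "c' = rotate (Suc j) c"
  have lc': "length c' = n" "distinct c'" "set c' = set c" using dc by (auto simp: c'_def n_def)
  have nth': "\<And>k. k < n \<Longrightarrow> c'!k = c!((Suc j + k) mod n)" unfolding c'_def n_def by (rule nth_rotate)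
  have e0: "c'!0 = c!(Suc j mod n)" using nth'[of 0] n3 by simp
  have "(Suc j + (n-1)) mod n = j" using j n3 by (simp add: mod_lt2)
  then have e1: "c'!(n-1) = c!j" using nth'[of "n-1"] n3 by simp
  have edges: "\<forall>k. Suc k < length c' \<longrightarrow> {c'!k, c'!Suc k} \<in> E"
  proof (intro allI impI)
    fix k assume k: "Suc k < length c'"
    define a where "a = (Suc j + k) mod n"
    have an: "a < n" using n3 a_def by simp
    have "c'!k = c!a" using nth'[of k] k lc' a_def by simp
    moreover have "c'!Suc k = c!(Suc a mod n)"
      using nth'[of "Suc k"] k lc' a_def by (simp add: mod_Suc_eq)
    moreover have "{c!a, c!(Suc a mod n)} \<in> cycle_edges c" using an cyc_edgeI[of a c] n_def by simp
    moreover have "{c!a, c!(Suc a mod n)} \<noteq> {s,t}"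
    proof
      assume h: "{c!a, c!(Suc a mod n)} = {s,t}"
      have "3 \<le> length c" "a < length c" "j < length c" using n3 an j(1) n_def by auto
      then have "a = j" using cyc_edge_inj[OF dc, of a j] h j(2) unfolding n_def by metis
      then show False using a_def k lc' j(1) mod_lt2[of "Suc j + k" n] by (auto split: if_splits)
    qed
    ultimately show "{c'!k, c'!Suc k} \<in> E" using ce by auto
  qed
  have cne: "c' \<noteq> []" using lc' n3 by auto
  have pc': "is_path E c' (c'!0) (c'!(n-1))"
    using edges lc' cne by (simp add: is_path_def hd_conv_nth last_conv_nth)
  have "{c'!0, c'!(n-1)} = {s,t}" using e0 e1 j(2) by (simp add: insert_commute)
  then have "(c'!0 = s \<and> c'!(n-1) = t) \<or> (c'!0 = t \<and> c'!(n-1) = s)" by (auto simp: doubleton_eq_iff)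
  then show ?thesis
  proof
    assume "c'!0 = s \<and> c'!(n-1) = t"
    then show ?thesis using pc' lc' by auto
  next
    assume "c'!0 = t \<and> c'!(n-1) = s"
    then show ?thesis using path_rev[OF pc'] lc' by (intro exI[of _ "rev c'"]) auto
  qed
qed

theorem mainTheorem4:
  fixes V :: "'a set" and E :: "'a set set" and s t :: 'a
  assumes "simple_graph V E" and "s \<in> V" and "t \<in> V" and "s \<noteq> t"
  shows "\<exists>B. biconnected_component (fst (add_edge (V, E) s t)) (snd (add_edge (V, E) s t)) B
             \<and> s \<in> fst B \<and> t \<in> fst B
             \<and> B = add_edge (relevant_part V E s t) s t"
proof -
  define E' where "E' = E \<union> {{s,t}}"
  define R where "R = {v. \<exists>p. is_path E p s t \<and> v \<in> set p}"
  define C where "C = {f \<in> E'. bicon_rel E' {s,t} f}"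
  have rp: "relevant_part V E s t = (R, {e \<in> E. e \<subseteq> R})"
    by (simp add: relevant_part_def R_def Let_def)
  have sndE: "snd (add_edge (V, E) s t) = E'" by (simp add: add_edge_def E'_def)
  have C_eq: "C = {e \<in> E. e \<subseteq> R} \<union> {{s,t}}"
  proof
    show "C \<subseteq> {e \<in> E. e \<subseteq> R} \<union> {{s,t}}"
    proof
      fix f assume f: "f \<in> C"
      show "f \<in> {e \<in> E. e \<subseteq> R} \<union> {{s,t}}"
      proof (cases "f = {s,t}")
        case False
        then have fE: "f \<in> E" using f by (auto simp: C_def E'_def)
        from f False obtain c where c: "is_cycle E' c" "{s,t} \<in> cycle_edges c" "f \<in> cycle_edges c"
          by (auto simp: C_def bicon_rel_def)
        obtain p where p: "is_path E p s t" "set p = set c"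
          using cyc_path[of E s t c] c(1,2) assms(4) E'_def by blast
        have "f \<subseteq> set c"
        proof -
          obtain i where i: "i < length c" "f = {c ! i, c ! (Suc i mod length c)}"
            using c(3) unfolding cycle_edges_def by blast
          then have "Suc i mod length c < length c" using mod_less_divisor[of "length c" "Suc i"] by linarith
          then show ?thesis using i by auto
        qed
        then have "f \<subseteq> R" using p unfolding R_def by auto
        then show ?thesis using fE by simp
      qed simp
    qed
  next
    show "{e \<in> E. e \<subseteq> R} \<union> {{s,t}} \<subseteq> C"
    proof
      fix f assume f: "f \<in> {e \<in> E. e \<subseteq> R} \<union> {{s,t}}"
      show "f \<in> C"
      proof (cases "f = {s,t}")
        case True then show ?thesis by (simp add: C_def E'_def bicon_rel_def)
      next
        case False
        then have fE: "f \<in> E" "f \<subseteq> R" using f by auto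
        obtain u v where uv: "f = {u,v}" "u \<noteq> v" using assms(1) fE(1) unfolding simple_graph_def by blast
        obtain P where P: "is_path E P s t" "u \<in> set P" using fE(2) uv(1) unfolding R_def by auto
        obtain Q where Q: "is_path E Q s t" "v \<in> set Q" using fE(2) uv(1) unfolding R_def by auto
        obtain p i where pi: "is_path E p s t" "Suc i < length p" "{p!i, p!Suc i} = {u,v}"
          using key[OF P(1) Q(1) P(2) Q(2) _ uv(2)] fE(1) uv(1) by blast
        have "is_cycle E' p \<and> {s,t} \<in> cycle_edges p \<and> {p!i,p!Suc i} \<in> cycle_edges p"
          using path_cycle[OF pi(1) assms(4) pi(2)] pi(3) uv(1) False E'_def by simp
        then have "bicon_rel E' {s,t} f" using pi(3) uv(1) unfolding bicon_rel_def by auto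
        then show ?thesis using fE(1) by (simp add: C_def E'_def)
      qed
    qed
  qed
  have U: "\<Union>C = R \<union> {s,t}"
  proof
    show "\<Union>C \<subseteq> R \<union> {s,t}" using C_eq by auto
  next
    show "R \<union> {s,t} \<subseteq> \<Union>C"
    proof
      fix x assume x: "x \<in> R \<union> {s,t}"
      show "x \<in> \<Union>C"
      proof (cases "x \<in> {s,t}")
        case True then show ?thesis using C_eq by auto
      next
        case False
        then obtain p where p: "is_path E p s t" "x \<in> set p" using x unfolding R_def by auto
        obtain k where k: "k < length p" "p!k = x" using p(2) by (auto simp: in_set_conv_nth)
        have pe: "\<forall>i. Suc i < length p \<longrightarrow> {p!i,p!Suc i} \<in> E" using p(1) by (simp add: is_path_def)
        have sp: "set p \<subseteq> R" using p(1) unfolding R_def by auto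
        have "p!0 = s" using p(1) by (auto simp: is_path_def hd_conv_nth)
        have "k \<noteq> 0"
        proof
          assume "k = 0"
          then have "x = s" using k \<open>p!0 = s\<close> by simp
          then show False using False by simp
        qed
        then have "Suc (k-1) < length p" using k by simp
        then have "{p!(k-1), p!Suc (k-1)} \<in> E" using pe by blast
        moreover have "Suc (k-1) = k" using \<open>k \<noteq> 0\<close> by simp
        moreover have "p!(k-1) \<in> set p" using k by simp
        ultimately have "{p!(k-1), x} \<in> {e \<in> E. e \<subseteq> R}" using k sp by auto
        then show ?thesis using C_eq by auto
      qed
    qed
  qed
  have bc: "biconnected_component (fst (add_edge (V, E) s t)) (snd (add_edge (V, E) s t)) (\<Union>C, C)"
    unfolding biconnected_component_def sndE C_def E'_def by auto
  have "(\<Union>C, C) = add_edge (relevant_part V E s t) s t"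
    using U C_eq rp by (simp add: add_edge_def)
  moreover have "s \<in> fst (\<Union>C, C)" "t \<in> fst (\<Union>C, C)" using U by auto
  ultimately show ?thesis using bc by blast
qed

end
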